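(* Let $G$ and $K$ be finite sets, let $\beta:G\rightarrow K$ be a surjective function, let $U\subseteq\Lambda^G$ be such that $\Xi_\beta(U)=\Lambda^K$, and let $f:G\rightarrow\mathbb R^+$ and $f^*:K\rightarrow\mathbb R^+$ be such that $f$ is thematically mean invariant with respect to $f^*$ on $U$ under $\beta$, i.e. for all $p\in U$ and all $k\in K$, $\mathcal E_f(\mathcal C_\beta(p,k))=f^*(k)$. Then for every $p\in U$, \[\Xi_\beta(\mathcal S_f p)=\mathcal S_{f^*}(\Xi_\beta p).\]
   Context: $\mathbb R^+$ denotes the positive reals. For a set $X$, $\Lambda^X$ is the set of functions $p:X\rightarrow[0,1]$ with $\sum_{x\in X}p(x)=1$. For $\beta:G\rightarrow K$ and $k\in K$, $\langle k\rangle_\beta=\{x\in G\mid \beta(x)=k\}$, and $\Xi_\beta:\Lambda^G\rightarrow\Lambda^K$ is $(\Xi_\beta p)(k)=\sum_{x\in\langle k\rangle_\beta}p(x)$; $\Xi_\beta(U)=\{\Xi_\beta p\mid p\in U\}$. For a finite set $X$ and $f:X\rightarrow\mathbb R^+$, $\mathcal E_f(p)=\sum_{x\in X}f(x)p(x)$ (defined also for the zero function $p$), and $\mathcal S_f:\Lambda^X\rightarrow\Lambda^X$ is $(\mathcal S_fp)(x)=f(x)p(x)/\mathcal E_f(p)$. For $p\in\Lambda^G$ and $k\in K$, $\mathcal C_\beta(p,k):G\rightarrow[0,1]$ is given by $(\mathcal C_\beta(p,k))(x)=p(x)/(\Xi_\beta p)(k)$ if $\beta(x)=k$ and $(\Xi_\beta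 p)(k)>0$, and $0$ otherwise. *)

theory Defs
  imports "HOL-Analysis.Analysis"
begin

text \<open>Probability vectors on a finite set X, represented extensionally as
  functions that vanish outside X.\<close>
definition Lambda :: "'a set \<Rightarrow> ('a \<Rightarrow> real) set" where
  "Lambda X = {p. (\<forall>x\<in>X. 0 \<le> p x \<and> p x \<le> 1) \<and> (\<forall>x. x \<notin> X \<longrightarrow> p x = 0)
                 \<and> (\<Sum>x\<in>X. p x) = 1}"

definition fibre :: "'a set \<Rightarrow> ('a \<Rightarrow> 'b) \<Rightarrow> 'b \<Rightarrow> 'a set" where
  "fibre G \<beta> k = {x\<in>G. \<beta> x = k}"

definition Xi :: "'a set \<Rightarrow> 'b set \<Rightarrow> ('a \<Rightarrow> 'b) \<Rightarrow> ('a \<Rightarrow> real) \<Rightarrow> ('b \<Rightarrow> real)" where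
  "Xi G K \<beta> p = (\<lambda>k. if k \<in> K then (\<Sum>x\<in>fibre G \<beta> k. p x) else 0)"

definition Ef :: "'a set \<Rightarrow> ('a \<Rightarrow> real) \<Rightarrow> ('a \<Rightarrow> real) \<Rightarrow> real" where
  "Ef X f p = (\<Sum>x\<in>X. f x * p x)"

definition Sf :: "'a set \<Rightarrow> ('a \<Rightarrow> real) \<Rightarrow> ('a \<Rightarrow> real) \<Rightarrow> ('a \<Rightarrow> real)" where
  "Sf X f p = (\<lambda>x. if x \<in> X then f x * p x / Ef X f p else 0)"

definition Cond :: "'a set \<Rightarrow> 'b set \<Rightarrow> ('a \<Rightarrow> 'b) \<Rightarrow> ('a \<Rightarrow> real) \<Rightarrow> 'b \<Rightarrow> ('a \<Rightarrow> real)" where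
  "Cond G K \<beta> p k = (\<lambda>x. if x \<in> G \<and> \<beta> x = k \<and> Xi G K \<beta> p k > 0
                         then p x / Xi G K \<beta> p k else 0)"

end

theory Submission
  imports Defs
begin

theorem corollary1:
  fixes G :: "'a set" and K :: "'b set" and \<beta> :: "'a \<Rightarrow> 'b"
    and U :: "('a \<Rightarrow> real) set" and f :: "'a \<Rightarrow> real" and fstar :: "'b \<Rightarrow> real"
  assumes "finite G" and "finite K"
    and "\<beta> ` G = K"
    and "U \<subseteq> Lambda G"
    and "Xi G K \<beta> ` U = Lambda K"
    and "\<forall>x\<in>G. f x > 0" and "\<forall>k\<in>K. fstar k > 0"
    and "\<forall>p\<in>U. \<forall>k\<in>K. Ef G f (Cond G K \<beta> p k) = fstar k"
  shows "\<forall>p\<in>U. Xi G K \<beta> (Sf G f p) = Sf K fstar (Xi G K \<beta> p)"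
proof
  fix p assume pU: "p \<in> U"
  have pL: "p \<in> Lambda G" using pU assms(4) by blast
  have nn: "\<And>x. x \<in> G \<Longrightarrow> 0 \<le> p x" using pL unfolding Lambda_def by auto
  define q where "q = Xi G K \<beta> p"
  have key: "(\<Sum>x\<in>fibre G \<beta> k. f x * p x) = fstar k * q k" if kK: "k \<in> K" for k
  proof (cases "q k > 0")
    case True
    have qk: "q k = (\<Sum>x\<in>fibre G \<beta> k. p x)" using kK unfolding q_def Xi_def by simp
    have "fstar k = Ef G f (Cond G K \<beta> p k)" using assms(8) pU kK by auto
    also have "\<dots> = (\<Sum>x\<in>G. if \<beta> x = k then f x * p x / q k else 0)"
      unfolding Ef_def Cond_def q_def[symmetric] using True
      by (intro sum.cong) auto
    also have "\<dots> = (\<Sum>x\<in>fibre G \<beta> k. f x * p x / q k)"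
      unfolding fibre_def using assms(1) by (simp add: sum.inter_filter[symmetric])
    also have "\<dots> = (\<Sum>x\<in>fibre G \<beta> k. f x * p x) / q k"
      by (simp add: sum_divide_distrib)
    finally show ?thesis using True by (simp add: field_simps)
  next
    case False
    have qk: "q k = (\<Sum>x\<in>fibre G \<beta> k. p x)" using kK unfolding q_def Xi_def by simp
    have fin: "finite (fibre G \<beta> k)" using assms(1) unfolding fibre_def by simp
    have nnf: "\<forall>x\<in>fibre G \<beta> k. 0 \<le> p x" using nn unfolding fibre_def by auto
    have "q k \<ge> 0" unfolding qk using nnf by (simp add: sum_nonneg)
    hence "q k = 0" using False by simp
    hence "\<forall>x\<in>fibre G \<beta> k. p x = 0" using sum_nonneg_eq_0_iff[OF fin] nnf qk by metis
    thus ?thesis using \<open>q k = 0\<close> by simp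
  qed
  have E: "Ef G f p = Ef K fstar q"
  proof -
    have "Ef G f p = (\<Sum>k\<in>K. \<Sum>x\<in>fibre G \<beta> k. f x * p x)"
      unfolding Ef_def fibre_def using sum.group[OF assms(1) assms(2), of \<beta> "\<lambda>x. f x * p x"] assms(3)
      by simp
    also have "\<dots> = Ef K fstar q" unfolding Ef_def using key by simp
    finally show ?thesis .
  qed
  show "Xi G K \<beta> (Sf G f p) = Sf K fstar (Xi G K \<beta> p)"
  proof
    fix k
    show "Xi G K \<beta> (Sf G f p) k = Sf K fstar (Xi G K \<beta> p) k"
    proof (cases "k \<in> K")
      case True
      have "Xi G K \<beta> (Sf G f p) k = (\<Sum>x\<in>fibre G \<beta> k. f x * p x / Ef G f p)"
        unfolding Xi_def Sf_def using True by (simp, intro sum.cong) (auto simp: fibre_def)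
      also have "\<dots> = fstar k * q k / Ef K fstar q"
        using key[OF True] E by (simp add: sum_divide_distrib[symmetric])
      finally show ?thesis unfolding Sf_def q_def using True by simp
    next
      case False
      then show ?thesis unfolding Xi_def Sf_def by simp
    qed
  qed
qed

end
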